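(* Let $(E,P,\vartheta)$ be a complete bipolar metric space and let $F\colon E\cup P\to E\cup P$ satisfy $F(E)\subseteq E$, $F(P)\subseteq P$. Suppose there exist $\pi\in(0,1)$, an integer $\sigma\geq 1$ and constants $q_1,\dots,q_\sigma\in(0,\infty)$ such that $$\sum_{\upsilon=1}^{\sigma} q_\upsilon\,\vartheta^\upsilon(Fe,Ff)\leq\pi\sum_{\upsilon=1}^{\sigma}q_\upsilon\,\vartheta^\upsilon(e,f)\quad\text{for all } e\in E,\ f\in P.$$ Then $F$ has a unique fixed point.
   Context: A bipolar metric space is a triple $(E,P,\vartheta)$ where $E,P$ are nonempty sets and $\vartheta\colon E\times P\to[0,\infty)$ satisfies: (1) for $e\in E$, $f\in P$, $\vartheta(e,f)=0$ iff $e=f$; (2) $\vartheta(e,f)=\vartheta(f,e)$ whenever $e,f\in E\cap P$; (3) $\vartheta(e,f)\leq\vartheta(e,z)+\vartheta(r,z)+\vartheta(r,f)$ for all $e,r\in E$, $z,f\in P$. A sequence $(x_n)$ in $E$ converges to $y\in P$ if $\vartheta(x_n,y)\to0$; a sequence $(y_n)$ in $P$ converges to $x\in E$ if $\vartheta(x,y_n)\to0$. A bisequence $(x_n,y_n)$ with $x_n\in E$, $y_n\in P$ is Cauchy if for every $\varepsilon>0$ there is $N$ with $\vartheta(x_n,y_m)<\varepsilon$ for all $n,m\geq N$; the space is complete if every Cauchy bisequence is convergent. $\vartheta^\upsilon$ denotes the $\upsilon$-th power of $\vartheta$. A fixed point of $F$ is a point $g$ with $Fg=g$. *)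

theory Defs
  imports Complex_Main
begin

text \<open>Bipolar metric space (E, P, d): d is only meaningful on E \<times> P.\<close>
definition bipolar_metric_space :: "'a set \<Rightarrow> 'a set \<Rightarrow> ('a \<Rightarrow> 'a \<Rightarrow> real) \<Rightarrow> bool" where
  "bipolar_metric_space E P d \<longleftrightarrow>
     E \<noteq> {} \<and> P \<noteq> {} \<and>
     (\<forall>e\<in>E. \<forall>f\<in>P. d e f \<ge> 0) \<and>
     (\<forall>e\<in>E. \<forall>f\<in>P. d e f = 0 \<longleftrightarrow> e = f) \<and>
     (\<forall>e\<in>E \<inter> P. \<forall>f\<in>E \<inter> P. d e f = d f e) \<and>
     (\<forall>e\<in>E. \<forall>r\<in>E. \<forall>z\<in>P. \<forall>f\<in>P. d e f \<le> d e z + d r z + d r f)"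

definition left_conv :: "('a \<Rightarrow> 'a \<Rightarrow> real) \<Rightarrow> (nat \<Rightarrow> 'a) \<Rightarrow> 'a \<Rightarrow> bool" where
  "left_conv d x y \<longleftrightarrow> (\<lambda>n. d (x n) y) \<longlonglongrightarrow> 0"

definition right_conv :: "('a \<Rightarrow> 'a \<Rightarrow> real) \<Rightarrow> (nat \<Rightarrow> 'a) \<Rightarrow> 'a \<Rightarrow> bool" where
  "right_conv d y x \<longleftrightarrow> (\<lambda>n. d x (y n)) \<longlonglongrightarrow> 0"

definition cauchy_biseq :: "('a \<Rightarrow> 'a \<Rightarrow> real) \<Rightarrow> (nat \<Rightarrow> 'a) \<Rightarrow> (nat \<Rightarrow> 'a) \<Rightarrow> bool" where
  "cauchy_biseq d x y \<longleftrightarrow> (\<forall>\<epsilon>>0. \<exists>N. \<forall>n\<ge>N. \<forall>m\<ge>N. d (x n) (y m) < \<epsilon>)"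

definition convergent_biseq :: "'a set \<Rightarrow> 'a set \<Rightarrow> ('a \<Rightarrow> 'a \<Rightarrow> real) \<Rightarrow> (nat \<Rightarrow> 'a) \<Rightarrow> (nat \<Rightarrow> 'a) \<Rightarrow> bool" where
  "convergent_biseq E P d x y \<longleftrightarrow>
     (\<exists>u\<in>E \<inter> P. left_conv d x u \<and> right_conv d y u)"

definition complete_bipolar :: "'a set \<Rightarrow> 'a set \<Rightarrow> ('a \<Rightarrow> 'a \<Rightarrow> real) \<Rightarrow> bool" where
  "complete_bipolar E P d \<longleftrightarrow>
     (\<forall>x y. (\<forall>n. x n \<in> E) \<longrightarrow> (\<forall>n. y n \<in> P) \<longrightarrow> cauchy_biseq d x y \<longrightarrow> convergent_biseq E P d x y)"

end

theory Submission
  imports Defs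
begin

lemma phi_ge:
  fixes q :: "nat \<Rightarrow> real" and t :: real
  assumes "1 \<le> \<sigma>" "\<forall>\<upsilon>\<in>{1..\<sigma>}. 0 < q \<upsilon>" "0 \<le> t"
  shows "q 1 * t \<le> (\<Sum>\<upsilon>=1..\<sigma>. q \<upsilon> * t ^ \<upsilon>)"
proof -
  have "q 1 * t ^ 1 \<le> (\<Sum>\<upsilon>=1..\<sigma>. q \<upsilon> * t ^ \<upsilon>)"
  proof (rule member_le_sum)
    fix x assume "x \<in> {1..\<sigma>} - {1}"
    then have "0 < q x" using assms by auto
    then show "0 \<le> q x * t ^ x" using assms by simp
  qed (use assms in auto)
  then show ?thesis by simp
qed

lemma funpow_fix: "F g = g \<Longrightarrow> (F ^^ n) g = g"
  by (induction n) auto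

theorem corollary3p6:
  fixes E P :: "'a set" and d :: "'a \<Rightarrow> 'a \<Rightarrow> real" and F :: "'a \<Rightarrow> 'a"
    and \<pi> :: real and \<sigma> :: nat and q :: "nat \<Rightarrow> real"
  assumes "bipolar_metric_space E P d"
    and "complete_bipolar E P d"
    and "F ` E \<subseteq> E" and "F ` P \<subseteq> P"
    and "0 < \<pi>" and "\<pi> < 1"
    and "1 \<le> \<sigma>"
    and "\<forall>\<upsilon>\<in>{1..\<sigma>}. 0 < q \<upsilon>"
    and "\<forall>e\<in>E. \<forall>f\<in>P. (\<Sum>\<upsilon>=1..\<sigma>. q \<upsilon> * (d (F e) (F f)) ^ \<upsilon>)
                         \<le> \<pi> * (\<Sum>\<upsilon>=1..\<sigma>. q \<upsilon> * (d e f) ^ \<upsilon>)"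
  shows "\<exists>!g. g \<in> E \<union> P \<and> F g = g"
proof -
  note bm = assms(1)[unfolded bipolar_metric_space_def]
  have nn: "\<And>e f. e \<in> E \<Longrightarrow> f \<in> P \<Longrightarrow> 0 \<le> d e f" using bm by blast
  have zero: "\<And>e f. e \<in> E \<Longrightarrow> f \<in> P \<Longrightarrow> d e f = 0 \<longleftrightarrow> e = f" using bm by blast
  have tri: "\<And>e r z f. e \<in> E \<Longrightarrow> r \<in> E \<Longrightarrow> z \<in> P \<Longrightarrow> f \<in> P \<Longrightarrow> d e f \<le> d e z + d r z + d r f"
    using bm by blast
  obtain e0 f0 where e0: "e0 \<in> E" and f0: "f0 \<in> P" using bm by blast
  define \<Phi> where "\<Phi> t = (\<Sum>\<upsilon>=1..\<sigma>. q \<upsilon> * t ^ \<upsilon>)" for t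
  have q1: "0 < q 1" using assms(7,8) by auto
  have contr: "\<And>e f. e \<in> E \<Longrightarrow> f \<in> P \<Longrightarrow> \<Phi> (d (F e) (F f)) \<le> \<pi> * \<Phi> (d e f)"
    using assms(9) unfolding \<Phi>_def by blast
  have FE: "\<And>x n. x \<in> E \<Longrightarrow> (F ^^ n) x \<in> E"
  proof -
    fix x n assume "x \<in> E" then show "(F ^^ n) x \<in> E" by (induction n) (use assms(3) in auto)
  qed
  have FP: "\<And>x n. x \<in> P \<Longrightarrow> (F ^^ n) x \<in> P"
  proof -
    fix x n assume "x \<in> P" then show "(F ^^ n) x \<in> P" by (induction n) (use assms(4) in auto)
  qed
  have iter: "\<Phi> (d ((F ^^ n) e) ((F ^^ n) f)) \<le> \<pi> ^ n * \<Phi> (d e f)" if "e \<in> E" "f \<in> P" for e f n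
  proof (induction n)
    case 0 then show ?case by simp
  next
    case (Suc n)
    have "\<Phi> (d ((F ^^ Suc n) e) ((F ^^ Suc n) f)) \<le> \<pi> * \<Phi> (d ((F ^^ n) e) ((F ^^ n) f))"
      using contr[OF FE[OF that(1)] FP[OF that(2)]] by simp
    also have "\<dots> \<le> \<pi> * (\<pi> ^ n * \<Phi> (d e f))"
      using Suc assms(5) by (simp add: mult_left_mono)
    finally show ?case by (simp add: mult.assoc)
  qed
  have lin: "d e f \<le> \<Phi> (d e f) / q 1" if "e \<in> E" "f \<in> P" for e f
  proof -
    have "q 1 * d e f \<le> \<Phi> (d e f)" unfolding \<Phi>_def
      by (rule phi_ge) (use assms(7,8) nn that in auto)
    then show ?thesis using q1 by (simp add: field_simps)
  qed
  have dn: "d ((F ^^ n) e) ((F ^^ n) f) \<le> \<pi> ^ n * (\<Phi> (d e f) / q 1)" if "e \<in> E" "f \<in> P" for e f n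
  proof -
    have "d ((F ^^ n) e) ((F ^^ n) f) \<le> \<Phi> (d ((F ^^ n) e) ((F ^^ n) f)) / q 1"
      using lin FE FP that by blast
    also have "\<dots> \<le> \<pi> ^ n * \<Phi> (d e f) / q 1"
      using iter[OF that] q1 by (simp add: divide_right_mono)
    finally show ?thesis by simp
  qed
  have Knn: "0 \<le> \<Phi> (d e f) / q 1" if "e \<in> E" "f \<in> P" for e f
    using lin[OF that] nn[OF that] by linarith
  have dnz: "(\<lambda>n. d ((F ^^ n) e) ((F ^^ n) f)) \<longlonglongrightarrow> 0" if "e \<in> E" "f \<in> P" for e f
  proof (rule tendsto_sandwich[of "\<lambda>n. 0" _ _ "\<lambda>n. \<pi> ^ n * (\<Phi> (d e f) / q 1)"])
    show "\<forall>\<^sub>F n in sequentially. 0 \<le> d ((F ^^ n) e) ((F ^^ n) f)" using nn FE FP that by auto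
    show "\<forall>\<^sub>F n in sequentially. d ((F ^^ n) e) ((F ^^ n) f) \<le> \<pi> ^ n * (\<Phi> (d e f) / q 1)"
      using dn that by auto
    show "(\<lambda>n. \<pi> ^ n * (\<Phi> (d e f) / q 1)) \<longlonglongrightarrow> 0"
      by (rule tendsto_mult_left_zero, rule LIMSEQ_power_zero) (use assms(5,6) in auto)
  qed simp
  define x where "x n = (F ^^ n) e0" for n
  define y where "y n = (F ^^ n) f0" for n
  have xE: "x n \<in> E" for n using FE e0 x_def by auto
  have yP: "y n \<in> P" for n using FP f0 y_def by auto
  define K where "K = \<Phi> (d e0 f0) / q 1 + \<Phi> (d (F e0) f0) / q 1 + \<Phi> (d e0 (F f0)) / q 1"
  have Fe0: "F e0 \<in> E" and Ff0: "F f0 \<in> P" using assms(3,4) e0 f0 by auto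
  have K0: "0 \<le> K" unfolding K_def using Knn e0 f0 Fe0 Ff0 by (simp add: add_nonneg_nonneg)
  have an: "d (x n) (y n) \<le> K * \<pi> ^ n" for n
  proof -
    have "d (x n) (y n) \<le> \<pi> ^ n * (\<Phi> (d e0 f0) / q 1)" using dn e0 f0 x_def y_def by simp
    also have "\<dots> \<le> \<pi> ^ n * K" unfolding K_def
      using Knn Fe0 Ff0 e0 f0 assms(5) by (intro mult_left_mono) auto
    finally show ?thesis by (simp add: mult.commute)
  qed
  have bn: "d (x (Suc n)) (y n) \<le> K * \<pi> ^ n" for n
  proof -
    have "x (Suc n) = (F ^^ n) (F e0)" unfolding x_def by (simp add: funpow_Suc_right del: funpow.simps)
    then have "d (x (Suc n)) (y n) \<le> \<pi> ^ n * (\<Phi> (d (F e0) f0) / q 1)" using dn Fe0 f0 y_def by simp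
    also have "\<dots> \<le> \<pi> ^ n * K" unfolding K_def
      using Knn Fe0 Ff0 e0 f0 assms(5) by (intro mult_left_mono) auto
    finally show ?thesis by (simp add: mult.commute)
  qed
  have cn: "d (x n) (y (Suc n)) \<le> K * \<pi> ^ n" for n
  proof -
    have "y (Suc n) = (F ^^ n) (F f0)" unfolding y_def by (simp add: funpow_Suc_right del: funpow.simps)
    then have "d (x n) (y (Suc n)) \<le> \<pi> ^ n * (\<Phi> (d e0 (F f0)) / q 1)" using dn e0 Ff0 x_def by simp
    also have "\<dots> \<le> \<pi> ^ n * K" unfolding K_def
      using Knn Fe0 Ff0 e0 f0 assms(5) by (intro mult_left_mono) auto
    finally show ?thesis by (simp add: mult.commute)
  qed
  define G where "G = 2 * K / (1 - \<pi>)"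
  have GK: "K \<le> G" using K0 assms(5,6) unfolding G_def by (simp add: field_simps)
  have Geq: "2 * K + G * \<pi> = G" using assms(6) unfolding G_def by (simp add: field_simps)
  have pn: "0 \<le> \<pi> ^ n" for n using assms(5) by simp
  have cl1: "d (x n) (y (n + k)) \<le> G * \<pi> ^ n" for n k
  proof (induction k arbitrary: n)
    case 0 then show ?case using an[of n] GK pn[of n] by (simp add: order_trans mult_right_mono)
  next
    case (Suc k)
    have "d (x n) (y (n + Suc k)) \<le> d (x n) (y n) + d (x (Suc n)) (y n) + d (x (Suc n)) (y (Suc n + k))"
      using tri xE yP by simp
    also have "\<dots> \<le> K * \<pi> ^ n + K * \<pi> ^ n + G * \<pi> ^ Suc n"
      using an[of n] bn[of n] Suc.IH[of "Suc n"] by (intro add_mono) auto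
    also have "\<dots> = (2 * K + G * \<pi>) * \<pi> ^ n" by (simp add: algebra_simps)
    finally show ?case using Geq by simp
  qed
  have cl2: "d (x (n + k)) (y n) \<le> G * \<pi> ^ n" for n k
  proof (induction k arbitrary: n)
    case 0 then show ?case using an[of n] GK pn[of n] by (simp add: order_trans mult_right_mono)
  next
    case (Suc k)
    have "d (x (n + Suc k)) (y n) \<le> d (x (Suc n + k)) (y (Suc n)) + d (x n) (y (Suc n)) + d (x n) (y n)"
      using tri xE yP by simp
    also have "\<dots> \<le> G * \<pi> ^ Suc n + K * \<pi> ^ n + K * \<pi> ^ n"
      using an[of n] cn[of n] Suc.IH[of "Suc n"] by (intro add_mono) auto
    also have "\<dots> = (2 * K + G * \<pi>) * \<pi> ^ n" by (simp add: algebra_simps)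
    finally show ?case using Geq by simp
  qed
  have cl: "d (x n) (y m) \<le> G * \<pi> ^ min n m" for n m
  proof (cases "n \<le> m")
    case True
    then obtain k where "m = n + k" using le_Suc_ex by blast
    then show ?thesis using cl1 True by simp
  next
    case False
    then obtain k where "n = m + k" using le_Suc_ex[of m n] by auto
    then show ?thesis using cl2 False by simp
  qed
  have G0: "0 \<le> G" using GK K0 by simp
  have cauchy: "cauchy_biseq d x y"
    unfolding cauchy_biseq_def
  proof (intro allI impI)
    fix \<epsilon> :: real assume "0 < \<epsilon>"
    then have "0 < \<epsilon> / (G + 1)" using G0 by simp
    then obtain N where N: "\<pi> ^ N < \<epsilon> / (G + 1)" using real_arch_pow_inv assms(6) by blast
    show "\<exists>N. \<forall>n\<ge>N. \<forall>m\<ge>N. d (x n) (y m) < \<epsilon>"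
    proof (intro exI allI impI)
      fix n m assume "N \<le> n" "N \<le> m"
      then have "\<pi> ^ min n m \<le> \<pi> ^ N" using assms(5,6) by (intro power_decreasing) auto
      then have "G * \<pi> ^ min n m \<le> G * \<pi> ^ N" using G0 by (rule mult_left_mono)
      also have "\<dots> \<le> (G + 1) * \<pi> ^ N" using pn[of N] by (simp add: algebra_simps)
      also have "\<dots> < \<epsilon>" using N G0 by (simp add: field_simps)
      finally show "d (x n) (y m) < \<epsilon>" using cl[of n m] by linarith
    qed
  qed
  then obtain u where u: "u \<in> E" "u \<in> P" and lc: "left_conv d x u" and rc: "right_conv d y u"
    using assms(2) xE yP unfolding complete_bipolar_def convergent_biseq_def by blast
  have lc': "(\<lambda>n. d (x n) u) \<longlonglongrightarrow> 0" using lc unfolding left_conv_def .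
  have rc': "(\<lambda>n. d u (y n)) \<longlonglongrightarrow> 0" using rc unfolding right_conv_def .
  have Fu: "F u \<in> E" "F u \<in> P" using u assms(3,4) by auto
  have duu: "d u u = 0" using zero u by simp
  have Phi0: "(\<lambda>n. \<Phi> (d (x n) u)) \<longlonglongrightarrow> \<Phi> 0"
    unfolding \<Phi>_def by (intro tendsto_intros lc')
  have Phi00: "\<Phi> 0 = 0" unfolding \<Phi>_def by (intro sum.neutral) auto
  have lim2: "(\<lambda>n. d (x (Suc n)) (F u)) \<longlonglongrightarrow> 0"
  proof (rule tendsto_sandwich[of "\<lambda>n. 0" _ _ "\<lambda>n. \<pi> ^ 1 * (\<Phi> (d (x n) u) / q 1)"])
    show "\<forall>\<^sub>F n in sequentially. 0 \<le> d (x (Suc n)) (F u)" using nn xE Fu by auto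
    have "d (x (Suc n)) (F u) \<le> \<pi> ^ 1 * (\<Phi> (d (x n) u) / q 1)" for n
      using dn[OF xE u(2), of 1] by (simp add: x_def)
    then show "\<forall>\<^sub>F n in sequentially. d (x (Suc n)) (F u) \<le> \<pi> ^ 1 * (\<Phi> (d (x n) u) / q 1)" by auto
    show "(\<lambda>n. \<pi> ^ 1 * (\<Phi> (d (x n) u) / q 1)) \<longlonglongrightarrow> 0"
      using tendsto_mult_left[OF tendsto_divide[OF Phi0 tendsto_const[of "q 1"]], of "\<pi> ^ 1"] Phi00 q1
      by simp
  qed simp
  have lim1: "(\<lambda>n. d (x (Suc n)) u) \<longlonglongrightarrow> 0" using LIMSEQ_Suc[OF lc'] .
  have "(\<lambda>n. d (x (Suc n)) u + d (x (Suc n)) (F u)) \<longlonglongrightarrow> 0 + 0"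
    by (intro tendsto_add lim1 lim2)
  moreover have "\<forall>n. d u (F u) \<le> d (x (Suc n)) u + d (x (Suc n)) (F u)"
  proof
    fix n
    have "d u (F u) \<le> d u u + d (x (Suc n)) u + d (x (Suc n)) (F u)"
      using tri u xE Fu by blast
    then show "d u (F u) \<le> d (x (Suc n)) u + d (x (Suc n)) (F u)" using duu by simp
  qed
  ultimately have "d u (F u) \<le> 0" using LIMSEQ_le_const by fastforce
  then have "d u (F u) = 0" using nn u Fu by (simp add: order_antisym)
  then have Ffix: "F u = u" using zero u Fu by simp
  show ?thesis
  proof (rule ex1I[of _ u])
    show "u \<in> E \<union> P \<and> F u = u" using u Ffix by simp
  next
    fix g assume g: "g \<in> E \<union> P \<and> F g = g"
    then have Fg: "\<And>n. (F ^^ n) g = g" using funpow_fix by metis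
    show "g = u"
    proof (cases "g \<in> E")
      case True
      have l: "(\<lambda>n. d g (y n)) \<longlonglongrightarrow> 0" using dnz[OF True f0] Fg unfolding y_def by simp
      have "(\<lambda>n. d g (y n) + d u (y n)) \<longlonglongrightarrow> 0 + 0" by (intro tendsto_add l rc')
      moreover have "\<forall>n. d g u \<le> d g (y n) + d u (y n)"
      proof
        fix n
        have "d g u \<le> d g (y n) + d u (y n) + d u u" using tri True u yP by blast
        then show "d g u \<le> d g (y n) + d u (y n)" using duu by simp
      qed
      ultimately have "d g u \<le> 0" using LIMSEQ_le_const by fastforce
      then have "d g u = 0" using nn True u by (simp add: order_antisym)
      then show ?thesis using zero True u by simp
    next
      case False
      then have gP: "g \<in> P" using g by simp
      have l: "(\<lambda>n. d (x n) g) \<longlonglongrightarrow> 0" using dnz[OF e0 gP] Fg unfolding x_def by simp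
      have "(\<lambda>n. d (x n) u + d (x n) g) \<longlonglongrightarrow> 0 + 0" by (intro tendsto_add l lc')
      moreover have "\<forall>n. d u g \<le> d (x n) u + d (x n) g"
      proof
        fix n
        have "d u g \<le> d u u + d (x n) u + d (x n) g" using tri gP u xE by blast
        then show "d u g \<le> d (x n) u + d (x n) g" using duu by simp
      qed
      ultimately have "d u g \<le> 0" using LIMSEQ_le_const by fastforce
      then have "d u g = 0" using nn gP u by (simp add: order_antisym)
      then show ?thesis using zero gP u by simp
    qed
  qed
qed

end
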